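(* Let $\mathbb{F}\in\{\mathbb{R},\mathbb{C}\}$, let $A_1,A_2,\ldots$ be a sequence of matrices in $\mathbb{F}^{n\times n}$, let $H$ be a subspace of $\mathbb{F}^n$ invariant under every $A_i$, and let $\nu$ be a vector norm on $\mathbb{F}^n$. Suppose that $\sum_{i=1}^\infty(\max(\nu^0_H(A_i),1)-1)$ converges and that $\sum_{i=1}^\infty(1-\min(\nu^0_H(A_i),1))$ diverges. Let $(C_{p,r})_{r\ge1}$ be any sequence of general products from $A_1,A_2,\ldots$ (as defined below). Then for every $x\in H$, $\lim_{r\to\infty}C_{p,r}x=0$.
   Context: For a subspace $H$ invariant under $A$, the partial norm is $\nu^0_H(A)=\sup_{0\neq x\in H}\nu(Ax)/\nu(x)$ (the operator norm of the restriction of $A$ to $H$). General products: given a permutation $\sigma$ of the positive integers, set $B_i=A_{\sigma(i)}$; for an integer $p\ge0$ and each $r\ge1$, $C_{p,r}$ is a product of the matrices $B_{p+1},\ldots,B_{p+r}$, each used exactly once, taken in some order (the order may be chosen arbitrarily and independently for each $r$). *)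

theory Defs
  imports "HOL-Analysis.Analysis"
begin

text \<open>The scalar field F ranges over the real normed fields (which are exactly R and C up to
  isomorphism); vectors in F^n are of type 'f^'n, matrices of type 'f^'n^'n.\<close>

definition is_vector_norm :: "('f::real_normed_field ^ 'n \<Rightarrow> real) \<Rightarrow> bool" where
  "is_vector_norm \<nu> \<longleftrightarrow>
     (\<forall>x. 0 \<le> \<nu> x) \<and> (\<forall>x. \<nu> x = 0 \<longleftrightarrow> x = 0) \<and>
     (\<forall>c x. \<nu> (c *s x) = norm c * \<nu> x) \<and> (\<forall>x y. \<nu> (x + y) \<le> \<nu> x + \<nu> y)"

definition partial_norm ::
    "('f::real_normed_field ^ 'n \<Rightarrow> real) \<Rightarrow> ('f ^ 'n) set \<Rightarrow> 'f ^ 'n ^ 'n \<Rightarrow> real" where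
  "partial_norm \<nu> H A = (SUP x \<in> H - {0}. \<nu> (A *v x) / \<nu> x)"

definition mat_prod_list :: "('a::semiring_1 ^ 'n ^ 'n) list \<Rightarrow> 'a ^ 'n ^ 'n" where
  "mat_prod_list Ms = foldr (**) Ms (mat 1)"

end

theory Submission
  imports Defs
begin

context
  fixes \<nu> :: "'f::{real_normed_field, banach} ^ 'n \<Rightarrow> real"
  assumes nu: "is_vector_norm \<nu>"
begin

lemma nu_nonneg: "0 \<le> \<nu> x" using nu by (simp add: is_vector_norm_def)
lemma nu_eq0: "\<nu> x = 0 \<longleftrightarrow> x = 0" using nu by (simp add: is_vector_norm_def)
lemma nu_scale: "\<nu> (c *s x) = norm c * \<nu> x" using nu by (simp add: is_vector_norm_def)
lemma nu_tri: "\<nu> (x + y) \<le> \<nu> x + \<nu> y" using nu by (simp add: is_vector_norm_def)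
lemma nu_zero[simp]: "\<nu> 0 = 0" using nu_eq0 by simp
lemma nu_neg: "\<nu> (- x) = \<nu> x"
  using nu_scale[of "-1" x] by simp
lemma nu_diff: "\<nu> (x - y) \<le> \<nu> x + \<nu> y"
  using nu_tri[of x "- y"] nu_neg[of y] by simp

lemma nu_sum: "\<nu> (sum f S) \<le> sum (\<lambda>i. \<nu> (f i)) S"
proof (induction S rule: infinite_finite_induct)
  case (insert a S) then show ?case using nu_tri[of "f a" "sum f S"] by simp
qed auto

lemma nu_upper_gen: "\<nu> (\<Sum>j\<in>UNIV. (x$j) *s w j) \<le> norm x * (\<Sum>j\<in>UNIV. \<nu> (w j))"
proof -
  have "\<nu> (\<Sum>j\<in>UNIV. (x$j) *s w j) \<le> (\<Sum>j\<in>UNIV. norm (x$j) * \<nu> (w j))"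
    using nu_sum[of "\<lambda>j. (x$j) *s w j" UNIV] by (simp add: nu_scale)
  also have "\<dots> \<le> (\<Sum>j\<in>UNIV. norm x * \<nu> (w j))"
    by (intro sum_mono mult_right_mono Finite_Cartesian_Product.norm_nth_le nu_nonneg)
  finally show ?thesis by (simp add: sum_distrib_left)
qed

lemma nu_upper: "\<exists>K\<ge>0. \<forall>x. \<nu> x \<le> K * norm x"
proof (intro exI[of _ "\<Sum>j\<in>UNIV. \<nu> (axis j 1)"] conjI allI)
  show "0 \<le> (\<Sum>j\<in>UNIV. \<nu> (axis j 1))" by (simp add: sum_nonneg nu_nonneg)
  fix x :: "'f^'n"
  show "\<nu> x \<le> (\<Sum>j\<in>UNIV. \<nu> (axis j 1)) * norm x"
    using nu_upper_gen[of x "\<lambda>j. axis j 1"] by (simp add: basis_expansion mult.commute)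
qed

lemma norm_axis_le: "norm (axis j (t::'f) :: 'f^'n) \<le> norm t"
proof -
  have "norm (axis j t :: 'f^'n) \<le> (\<Sum>i\<in>UNIV. norm ((axis j t :: 'f^'n) $ i))"
    unfolding norm_vec_def by (rule L2_set_le_sum) simp
  also have "\<dots> = (\<Sum>i\<in>UNIV. if i = j then norm t else 0)"
    by (rule sum.cong) (auto simp: axis_def)
  also have "\<dots> = norm t" by simp
  finally show ?thesis .
qed

lemma nu_lower_aux:
  assumes "finite S"
  shows "\<exists>M>0. \<forall>x. (\<forall>i. i \<notin> S \<longrightarrow> x$i = 0) \<longrightarrow> norm x \<le> M * \<nu> x"
  using assms
proof (induction S rule: finite_induct)
  case empty
  show ?case
  proof (intro exI[of _ 1] conjI allI impI)
    fix x :: "'f^'n" assume "\<forall>i. i \<notin> {} \<longrightarrow> x$i = 0"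
    then have "x = 0" by (simp add: vec_eq_iff)
    then show "norm x \<le> 1 * \<nu> x" by simp
  qed simp
next
  case (insert j S)
  from insert.IH obtain M where M: "M > 0" "\<And>x. (\<forall>i. i \<notin> S \<longrightarrow> x$i = 0) \<Longrightarrow> norm x \<le> M * \<nu> x"
    by blast
  from nu_upper obtain K where K: "K \<ge> 0" "\<And>x. \<nu> x \<le> K * norm x" by blast
  define e :: "'f^'n" where "e = axis j 1"
  have "\<exists>\<delta>>0. \<forall>v. (\<forall>i. i \<notin> S \<longrightarrow> v$i = 0) \<longrightarrow> \<delta> \<le> \<nu> (e + v)"
  proof (rule ccontr)
    assume "\<not> ?thesis"
    then have "\<forall>k::nat. \<exists>v. (\<forall>i. i \<notin> S \<longrightarrow> v$i = 0) \<and> \<nu> (e + v) < inverse (real (Suc k))"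
      by (metis not_le of_nat_0_less_iff positive_imp_inverse_positive zero_less_Suc)
    then obtain vs where vsS: "\<And>k i. i \<notin> S \<Longrightarrow> vs k $ i = 0"
      and vsn: "\<And>k. \<nu> (e + vs k) < inverse (real (Suc k))" by metis
    have "Cauchy vs"
    proof (rule metric_CauchyI)
      fix \<epsilon> :: real assume "\<epsilon> > 0"
      then have "\<epsilon> / (2*M) > 0" using M by simp
      then obtain N where N: "inverse (real (Suc N)) < \<epsilon> / (2*M)" using reals_Archimedean by blast
      show "\<exists>N. \<forall>m\<ge>N. \<forall>n\<ge>N. dist (vs m) (vs n) < \<epsilon>"
      proof (intro exI[of _ N] allI impI)
        fix m n assume mn: "m \<ge> N" "n \<ge> N"
        have im: "inverse (real (Suc m)) \<le> inverse (real (Suc N))"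
          using mn by (simp add: le_imp_inverse_le)
        have inn: "inverse (real (Suc n)) \<le> inverse (real (Suc N))"
          using mn by (simp add: le_imp_inverse_le)
        have "vs m - vs n = (e + vs m) - (e + vs n)" by simp
        then have "\<nu> (vs m - vs n) \<le> \<nu> (e + vs m) + \<nu> (e + vs n)" using nu_diff by metis
        also have "\<dots> < 2 * inverse (real (Suc N))" using vsn[of m] vsn[of n] im inn by linarith
        finally have a: "\<nu> (vs m - vs n) < 2 * inverse (real (Suc N))" .
        have "dist (vs m) (vs n) \<le> M * \<nu> (vs m - vs n)"
          unfolding dist_norm by (rule M(2)) (simp add: vsS)
        also have "\<dots> < M * (2 * inverse (real (Suc N)))"
          using a M(1) by simp
        also have "\<dots> < M * (2 * (\<epsilon> / (2*M)))" using N M(1) by (intro mult_strict_left_mono) auto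
        also have "\<dots> = \<epsilon>" using M(1) by simp
        finally show "dist (vs m) (vs n) < \<epsilon>" .
      qed
    qed
    then obtain v where v: "vs \<longlonglongrightarrow> v" using Cauchy_convergent_iff convergent_def by blast
    have vS: "v $ i = 0" if "i \<notin> S" for i
    proof -
      have "(\<lambda>k. vs k $ i) \<longlonglongrightarrow> v $ i" using v by (rule tendsto_vec_nth)
      moreover have "(\<lambda>k. vs k $ i) = (\<lambda>k. 0)" using vsS that by auto
      ultimately show ?thesis using LIMSEQ_unique tendsto_const by metis
    qed
    have lim: "(\<lambda>k. inverse (real (Suc k)) + K * norm (v - vs k)) \<longlonglongrightarrow> 0 + K * 0"
      apply (intro tendsto_intros)
      using LIMSEQ_inverse_real_of_nat apply simp
      using tendsto_norm_zero[OF LIM_zero[OF v]] by (simp add: norm_minus_commute)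
    have lim': "(\<lambda>k. inverse (real (Suc k)) + K * norm (v - vs k)) \<longlonglongrightarrow> 0"
      using lim by simp
    have "\<nu> (e + v) \<le> 0"
    proof (rule LIMSEQ_le_const[OF lim'])
      show "\<exists>N. \<forall>n\<ge>N. \<nu> (e + v) \<le> inverse (real (Suc n)) + K * norm (v - vs n)"
      proof (intro exI[of _ 0] allI impI)
        fix n :: nat
        have "e + v = (e + vs n) + (v - vs n)" by simp
        then have "\<nu> (e + v) \<le> \<nu> (e + vs n) + \<nu> (v - vs n)" using nu_tri by metis
        then show "\<nu> (e + v) \<le> inverse (real (Suc n)) + K * norm (v - vs n)"
          using vsn[of n] K(2)[of "v - vs n"] by linarith
      qed
    qed
    then have "e + v = 0" using nu_nonneg[of "e+v"] nu_eq0 by (meson antisym)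
    then have "(e + v) $ j = 0" by simp
    then show False using vS[of j] insert.hyps(2) by (simp add: e_def)
  qed
  then obtain \<delta> where d: "\<delta> > 0" "\<And>v. (\<forall>i. i \<notin> S \<longrightarrow> v$i = 0) \<Longrightarrow> \<delta> \<le> \<nu> (e + v)" by blast
  define E where "E = \<nu> e"
  have E0: "E \<ge> 0" by (simp add: E_def nu_nonneg)
  show ?case
  proof (intro exI[of _ "M + (M * E + 1) / \<delta>"] conjI allI impI)
    show "M + (M * E + 1) / \<delta> > 0" using M(1) d(1) E0 by (simp add: add_pos_nonneg)
    fix x :: "'f^'n" assume x: "\<forall>i. i \<notin> insert j S \<longrightarrow> x$i = 0"
    define t where "t = x $ j"
    define v where "v = x - t *s e"
    have vS: "\<forall>i. i \<notin> S \<longrightarrow> v$i = 0" using x by (auto simp: v_def t_def e_def axis_def)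
    have xv: "x = v + t *s e" by (simp add: v_def)
    have ax: "t *s e = axis j t" by (simp add: e_def vec_eq_iff axis_def)
    have a: "norm t * \<delta> \<le> \<nu> x"
    proof (cases "t = 0")
      case True then show ?thesis by (simp add: nu_nonneg)
    next
      case False
      have "x = t *s (e + inverse t *s v)" using False
        by (simp add: xv vector_add_ldistrib vector_smult_assoc add.commute)
      then have "\<nu> x = norm t * \<nu> (e + inverse t *s v)" by (metis nu_scale)
      moreover have "\<delta> \<le> \<nu> (e + inverse t *s v)" by (rule d(2)) (simp add: vS)
      ultimately show ?thesis by (simp add: mult_left_mono)
    qed
    have b: "norm v \<le> M * (\<nu> x + norm t * E)"
    proof -
      have "norm v \<le> M * \<nu> v" by (rule M(2)[OF vS])
      also have "\<nu> v \<le> \<nu> x + \<nu> (t *s e)" unfolding v_def by (rule nu_diff)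
      then have "M * \<nu> v \<le> M * (\<nu> x + norm t * E)" using M(1) by (simp add: nu_scale E_def)
      finally show ?thesis .
    qed
    have c: "norm x \<le> norm v + norm t"
      using norm_triangle_ineq[of v "t *s e"] norm_axis_le[of j t] by (simp add: xv ax)
    have nt: "norm t \<le> \<nu> x / \<delta>" using a d(1) by (simp add: field_simps)
    have "norm x \<le> M * \<nu> x + (M * E + 1) * norm t" using b c by (simp add: algebra_simps)
    also have "\<dots> \<le> M * \<nu> x + (M * E + 1) * (\<nu> x / \<delta>)"
      using nt M(1) E0 by (intro add_left_mono mult_left_mono) auto
    also have "\<dots> = (M + (M * E + 1) / \<delta>) * \<nu> x" using d(1) by (simp add: field_simps)
    finally show "norm x \<le> (M + (M * E + 1) / \<delta>) * \<nu> x" .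
  qed
qed

lemma nu_lower: "\<exists>M>0. \<forall>x. norm x \<le> M * \<nu> x"
  using nu_lower_aux[of UNIV] by simp

lemma pn_bound:
  assumes "x \<in> H"
  shows "\<nu> (A *v x) \<le> partial_norm \<nu> H A * \<nu> x"
proof (cases "x = 0")
  case True then show ?thesis by simp
next
  case False
  obtain M where M: "M > 0" "\<And>y. norm y \<le> M * \<nu> y" using nu_lower by blast
  define Q where "Q = M * (\<Sum>j\<in>UNIV. \<nu> (column j A))"
  have bd: "\<nu> (A *v y) / \<nu> y \<le> Q" for y
  proof (cases "y = 0")
    case True then show ?thesis
      using M(1) by (simp add: Q_def sum_nonneg nu_nonneg)
  next
    case False
    then have py: "\<nu> y > 0" using nu_nonneg[of y] nu_eq0[of y] by linarith
    have "\<nu> (A *v y) \<le> norm y * (\<Sum>j\<in>UNIV. \<nu> (column j A))"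
      unfolding matrix_mult_sum by (rule nu_upper_gen)
    also have "\<dots> \<le> (M * \<nu> y) * (\<Sum>j\<in>UNIV. \<nu> (column j A))"
      by (intro mult_right_mono M(2) sum_nonneg nu_nonneg)
    finally show ?thesis using py by (simp add: Q_def field_simps)
  qed
  have "bdd_above ((\<lambda>y. \<nu> (A *v y) / \<nu> y) ` (H - {0}))"
    using bd by (intro bdd_aboveI2) 
  then have "\<nu> (A *v x) / \<nu> x \<le> partial_norm \<nu> H A"
    unfolding partial_norm_def using assms False by (intro cSUP_upper) auto
  moreover have "\<nu> x > 0" using False nu_nonneg[of x] nu_eq0[of x] by linarith
  ultimately show ?thesis by (simp add: field_simps)
qed

lemma pn_nonneg:
  assumes "h \<in> H" "h \<noteq> 0"
  shows "0 \<le> partial_norm \<nu> H A"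
proof -
  have "\<nu> (A *v h) \<le> partial_norm \<nu> H A * \<nu> h" by (rule pn_bound[OF assms(1)])
  moreover have "\<nu> h > 0" using assms nu_nonneg[of h] nu_eq0[of h] by linarith
  moreover have "0 \<le> \<nu> (A *v h)" by (rule nu_nonneg)
  ultimately show ?thesis by (metis not_le mult_neg_pos not_less order_trans)
qed

lemma prod_bound:
  assumes "h \<in> H" "h \<noteq> 0" "\<And>M y. M \<in> set Ms \<Longrightarrow> y \<in> H \<Longrightarrow> M *v y \<in> H" "x \<in> H"
  shows "mat_prod_list Ms *v x \<in> H \<and>
    \<nu> (mat_prod_list Ms *v x) \<le> prod_list (map (partial_norm \<nu> H) Ms) * \<nu> x"
  using assms(3)
proof (induction Ms)
  case Nil then show ?case using assms(4) by (simp add: mat_prod_list_def)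
next
  case (Cons M Ms)
  have IH: "mat_prod_list Ms *v x \<in> H"
    "\<nu> (mat_prod_list Ms *v x) \<le> prod_list (map (partial_norm \<nu> H) Ms) * \<nu> x"
    using Cons by auto
  have eq: "mat_prod_list (M # Ms) *v x = M *v (mat_prod_list Ms *v x)"
    by (simp add: mat_prod_list_def matrix_vector_mul_assoc)
  have "\<nu> (M *v (mat_prod_list Ms *v x)) \<le> partial_norm \<nu> H M * \<nu> (mat_prod_list Ms *v x)"
    by (rule pn_bound[OF IH(1)])
  also have "\<dots> \<le> partial_norm \<nu> H M * (prod_list (map (partial_norm \<nu> H) Ms) * \<nu> x)"
    by (intro mult_left_mono IH(2) pn_nonneg[OF assms(1,2)])
  finally show ?case using eq IH(1) Cons.prems by (simp add: mult.assoc)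
qed

end

lemma sum_le_suminf_shift:
  fixes f :: "nat \<Rightarrow> real"
  assumes "finite T" "T \<subseteq> {1..}" "\<And>i. 0 \<le> f i" "summable (\<lambda>i. f (i + 1))"
  shows "sum f T \<le> suminf (\<lambda>i. f (i + 1))"
proof -
  define U where "U = (\<lambda>i. i - 1) ` T"
  have T: "T = Suc ` U" using assms(2) unfolding U_def by (force simp: image_image)
  have "sum f T = sum (\<lambda>i. f (i + 1)) U" unfolding T by (simp add: sum.reindex)
  also have "\<dots> \<le> suminf (\<lambda>i. f (i + 1))"
    using assms by (intro sum_le_suminf) (auto simp: U_def)
  finally show ?thesis .
qed

lemma div_grow:
  fixes g :: "nat \<Rightarrow> real"
  assumes g0: "\<And>i. 0 \<le> g i" and g1: "\<And>i. g i \<le> 1"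
    and nd: "\<not> summable (\<lambda>i. g (i+1))" and sigma: "bij_betw \<sigma> {1..} {1..}"
  shows "eventually (\<lambda>r. L \<le> sum g (\<sigma> ` {p+1..p+r})) sequentially"
proof -
  obtain N where N: "sum (\<lambda>i. g (i+1)) {..<N} > L + real p"
  proof (rule ccontr)
    assume "\<not> thesis"
    then have "\<And>n. (\<Sum>i<n. g (i+1)) \<le> L + real p" using that by (meson not_le)
    then have "summable (\<lambda>i. g (i+1))" using g0 by (intro summableI_nonneg_bounded) auto
    then show False using nd by simp
  qed
  define I where "I = Suc ` {..<N}"
  have SI: "sum g I = sum (\<lambda>i. g (i+1)) {..<N}" unfolding I_def by (simp add: sum.reindex)
  have "\<forall>i\<in>I. \<exists>k. k \<ge> 1 \<and> \<sigma> k = i"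
  proof
    fix i assume "i \<in> I"
    then have "i \<in> {1..}" by (auto simp: I_def)
    then have "i \<in> \<sigma> ` {1..}" using sigma by (simp add: bij_betw_def)
    then show "\<exists>k. k \<ge> 1 \<and> \<sigma> k = i" by auto
  qed
  then obtain kf where kf: "\<And>i. i \<in> I \<Longrightarrow> kf i \<ge> 1 \<and> \<sigma> (kf i) = i" by metis
  define R where "R = Max (insert 0 (kf ` I))"
  have kR: "kf i \<le> R" if "i \<in> I" for i
    unfolding R_def using that by (intro Max_ge) (auto simp: I_def)
  show ?thesis
    unfolding eventually_sequentially
  proof (intro exI[of _ R] allI impI)
    fix r assume r: "r \<ge> R"
    have sub: "I \<subseteq> \<sigma> ` {1..p} \<union> \<sigma> ` {p+1..p+r}"
    proof
      fix i assume i: "i \<in> I"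
      then have "kf i \<ge> 1" "\<sigma> (kf i) = i" "kf i \<le> r" using kf kR r by (auto intro: order_trans)
      then show "i \<in> \<sigma> ` {1..p} \<union> \<sigma> ` {p+1..p+r}"
        by (metis (no_types, lifting) UnI1 UnI2 atLeastAtMost_iff image_eqI le_add2 not_less_eq_eq
            order_trans plus_1_eq_Suc add.commute not_le le_add_diff_inverse2 Suc_eq_plus1)
    qed
    have "sum g I \<le> sum g (\<sigma> ` {1..p} \<union> \<sigma> ` {p+1..p+r})"
      by (intro sum_mono2 sub g0) auto
    also have "\<dots> \<le> sum g (\<sigma> ` {1..p}) + sum g (\<sigma> ` {p+1..p+r})"
      by (subst sum_Un) (auto intro: sum_nonneg g0)
    also have "sum g (\<sigma> ` {1..p}) \<le> real p"
    proof -
      have "sum g (\<sigma> ` {1..p}) \<le> of_nat (card (\<sigma> ` {1..p})) * 1"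
        by (rule sum_bounded_above) (rule g1)
      also have "card (\<sigma> ` {1..p}) \<le> p" using card_image_le[of "{1..p}" \<sigma>] by simp
      finally show ?thesis by simp
    qed
    finally show "L \<le> sum g (\<sigma> ` {p+1..p+r})" using N SI by linarith
  qed
qed

theorem corollary3p3:
  fixes A :: "nat \<Rightarrow> 'f::{real_normed_field, banach} ^ 'n ^ 'n"
    and H :: "('f ^ 'n) set"
    and \<nu> :: "'f ^ 'n \<Rightarrow> real"
    and \<sigma> :: "nat \<Rightarrow> nat"
    and p :: nat
    and C :: "nat \<Rightarrow> 'f ^ 'n ^ 'n"
  assumes H_sub: "vec.subspace H"
    and H_inv: "\<And>i x. i \<ge> 1 \<Longrightarrow> x \<in> H \<Longrightarrow> A i *v x \<in> H"
    and nu: "is_vector_norm \<nu>"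
    and conv: "summable (\<lambda>i. max (partial_norm \<nu> H (A (i + 1))) 1 - 1)"
    and div: "\<not> summable (\<lambda>i. 1 - min (partial_norm \<nu> H (A (i + 1))) 1)"
    and sigma: "bij_betw \<sigma> {1..} {1..}"
    and C_def: "\<And>r. r \<ge> 1 \<Longrightarrow> \<exists>\<pi>. bij_betw \<pi> {1..r} {1..r} \<and>
                  C r = mat_prod_list (map (\<lambda>j. A (\<sigma> (p + \<pi> j))) [1..<r + 1])"
  shows "\<forall>x \<in> H. (\<lambda>r. C r *v x) \<longlonglongrightarrow> 0"
proof
  fix x assume x: "x \<in> H"
  obtain M where M: "M > 0" "\<And>y. norm y \<le> M * \<nu> y" using nu_lower[OF nu] by blast
  show "(\<lambda>r. C r *v x) \<longlonglongrightarrow> 0"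
  proof (cases "\<exists>h\<in>H. h \<noteq> 0")
    case False
    then have "x = 0" using x by auto
    then show ?thesis by simp
  next
    case True
    then obtain h0 where h0: "h0 \<in> H" "h0 \<noteq> 0" by blast
    define a where "a i = partial_norm \<nu> H (A i)" for i
    define b where "b i = max (a i) 1 - 1" for i
    define g where "g i = 1 - min (a i) 1" for i
    define Bs where "Bs = suminf (\<lambda>i. b (i + 1))"
    define G where "G r = sum g (\<sigma> ` {p+1..p+r})" for r
    have a0: "0 \<le> a i" for i unfolding a_def by (rule pn_nonneg[OF nu h0])
    have b0: "0 \<le> b i" for i by (simp add: b_def)
    have g0: "0 \<le> g i" for i by (simp add: g_def)
    have g1: "g i \<le> 1" for i using a0[of i] by (simp add: g_def)
    have bg: "a i - 1 = b i - g i" for i by (simp add: b_def g_def max_def min_def)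
    have conv': "summable (\<lambda>i. b (i + 1))" using conv by (simp add: b_def a_def)
    have div': "\<not> summable (\<lambda>i. g (i + 1))" using div by (simp add: g_def a_def)
    have key: "\<nu> (C r *v x) \<le> exp (Bs - G r) * \<nu> x" if r: "r \<ge> 1" for r
    proof -
      obtain \<pi> where pi: "bij_betw \<pi> {1..r} {1..r}"
        and Cr: "C r = mat_prod_list (map (\<lambda>j. A (\<sigma> (p + \<pi> j))) [1..<r + 1])"
        using C_def[OF r] by blast
      define T where "T = \<sigma> ` {p+1..p+r}"
      have finT: "finite T" by (simp add: T_def)
      have T1: "T \<subseteq> {1..}" using sigma unfolding T_def bij_betw_def by auto
      have inj: "inj_on \<sigma> {p+1..p+r}"
        using sigma unfolding bij_betw_def by (rule inj_on_subset[OF conjunct1]) auto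
      have b1: "bij_betw (\<lambda>k. p + k) {1..r} {p+1..p+r}"
        by (rule bij_betwI[where g="\<lambda>k. k - p"]) auto
      have b2: "bij_betw \<sigma> {p+1..p+r} T" unfolding T_def using inj by (simp add: bij_betw_def)
      have bij: "bij_betw (\<lambda>j. \<sigma> (p + \<pi> j)) {1..r} T"
        using bij_betw_trans[OF pi bij_betw_trans[OF b1 b2]] by (simp add: o_def)
      have inv: "M' *v y \<in> H" if "M' \<in> set (map (\<lambda>j. A (\<sigma> (p + \<pi> j))) [1..<r + 1])" "y \<in> H" for M' y
      proof -
        have "\<exists>j\<in>{1..r}. M' = A (\<sigma> (p + \<pi> j))" using that(1) by (auto simp: Suc_le_eq)
        then obtain j where j: "j \<in> {1..r}" "M' = A (\<sigma> (p + \<pi> j))" by blast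
        have "\<pi> j \<in> {1..r}" using pi j(1) by (auto simp: bij_betw_def)
        then have "\<sigma> (p + \<pi> j) \<in> {1..}" using sigma unfolding bij_betw_def by auto
        then show ?thesis using H_inv that(2) j(2) by auto
      qed
      have "\<nu> (C r *v x) \<le> prod_list (map (partial_norm \<nu> H) (map (\<lambda>j. A (\<sigma> (p + \<pi> j))) [1..<r + 1])) * \<nu> x"
        unfolding Cr using prod_bound[OF nu h0 inv x] by blast
      also have "prod_list (map (partial_norm \<nu> H) (map (\<lambda>j. A (\<sigma> (p + \<pi> j))) [1..<r + 1]))
          = (\<Prod>j\<in>{1..r}. a (\<sigma> (p + \<pi> j)))"
      proof -
        have "(\<Prod>j\<in>{1..r}. a (\<sigma> (p + \<pi> j))) = (\<Prod>j\<in>set [1..<r+1]. a (\<sigma> (p + \<pi> j)))"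
        proof -
          have "set [1..<r+1] = {1..r}" by auto
          then show ?thesis by simp
        qed
        also have "\<dots> = prod_list (map (\<lambda>j. a (\<sigma> (p + \<pi> j))) [1..<r+1])"
          by (rule prod.distinct_set_conv_list) simp
        finally show ?thesis by (simp add: a_def o_def)
      qed
      also have "(\<Prod>j\<in>{1..r}. a (\<sigma> (p + \<pi> j))) = (\<Prod>i\<in>T. a i)"
        by (rule prod.reindex_bij_betw[OF bij])
      also have "(\<Prod>i\<in>T. a i) \<le> (\<Prod>i\<in>T. exp (a i - 1))"
        by (intro prod_mono conjI a0) (metis exp_ge_add_one_self add.commute diff_add_cancel)
      also have "\<dots> = exp (\<Sum>i\<in>T. a i - 1)" by (simp add: exp_sum finT)
      also have "(\<Sum>i\<in>T. a i - 1) = sum b T - sum g T" by (simp add: bg sum_subtractf)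
      also have "sum b T \<le> Bs" unfolding Bs_def
        by (rule sum_le_suminf_shift[OF finT T1 b0 conv'])
      then have "exp (sum b T - sum g T) \<le> exp (Bs - G r)" by (simp add: G_def T_def)
      finally show ?thesis by (simp add: mult_right_mono nu_nonneg[OF nu])
    qed
    have ev: "eventually (\<lambda>r. norm (C r *v x) \<le> M * \<nu> x * exp (Bs - G r)) sequentially"
      unfolding eventually_sequentially
    proof (intro exI[of _ 1] allI impI)
      fix r :: nat assume "r \<ge> 1"
      have "norm (C r *v x) \<le> M * \<nu> (C r *v x)" by (rule M(2))
      also have "\<dots> \<le> M * (exp (Bs - G r) * \<nu> x)" using key[OF \<open>r \<ge> 1\<close>] M(1) by simp
      finally show "norm (C r *v x) \<le> M * \<nu> x * exp (Bs - G r)" by (simp add: ac_simps)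
    qed
    have "filterlim (\<lambda>r. Bs - G r) at_bot sequentially"
      unfolding filterlim_at_bot
    proof
      fix Z
      show "eventually (\<lambda>r. Bs - G r \<le> Z) sequentially"
        using div_grow[OF g0 g1 div' sigma, of "Bs - Z" p]
        by (elim eventually_mono) (simp add: G_def)
    qed
    then have "(\<lambda>r. exp (Bs - G r)) \<longlonglongrightarrow> 0"
      by (rule filterlim_compose[OF exp_at_bot])
    then have "(\<lambda>r. M * \<nu> x * exp (Bs - G r)) \<longlonglongrightarrow> 0"
      by (rule tendsto_mult_right_zero)
    then show ?thesis by (rule Lim_null_comparison[OF ev])
  qed
qed

end
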